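(* Let $X_{\mu,\varepsilon}$ be a two-parameter family of $C^r$ ($r\ge2$) vector fields on $\mathbb{R}^{n+1}$, $n\ge2$, all invariant under an involution $R$, with an $R$-symmetric saddle equilibrium $O$ ($RO=O$, $R$ linear near $O$), $\dim W^u(O)=1$, with characteristic exponents $\gamma>0>\lambda_1>\max_{i\ge2}\mathrm{Re}\,\lambda_i$, whose eigenvectors satisfy $Re_0=-e_0$ (for $\gamma$) and $Re_1=e_1$ (for $\lambda_1$), so that the two unstable separatrices satisfy $\Gamma_+=R\Gamma_-$. Assume that at $(\mu,\varepsilon)=(0,0)$: (i) both $\Gamma_\pm$ are homoclinic to $O$ and tend to $O$ tangentially to $e_1$ (homoclinic butterfly); (ii) $\gamma+\lambda_1=0$; (iii) the separatrix value $A$ satisfies $0<|A|<2$. Assume the family is a generic unfolding in the sense that, on a common symmetric cross-section $\Pi$ with coordinates $(u,v)$ ($u$ along $e_1$, $\{u=0\}=\Pi\cap W^s_{loc}(O)$), the Poincaré map has the form $$\bar u=\big(\mu+A|u|^{1-\varepsilon}+p(|u|,Q_{s(u)}v,\mu,\varepsilon)\big)s(u),\qquad \bar v=Q_{s(u)}\big(v_++B|u|^{1-\varepsilon}+q(|u|,Q_{s(u)}v,\mu,\varepsilon)\big),$$ where $s(u)=\mathrm{sign}(u)$, $Q_1=\mathrm{Id}$, $Q_{-1}$ is $R$ restricted to the $v$-space, $A,B,v_+$ depend continuously on $(\mu,\varepsilon)$, and $\|p,q,\partial_v(p,q)\|=o(|u|^{1-\varepsilon})$, $\|\partial_u(p,q)\|=o(|u|^{-\varepsilon})$.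 Then there is an open region $V_{LA}$ in the $(\mu,\varepsilon)$-plane whose closure contains $(0,0)$ such that $X_{\mu,\varepsilon}$ possesses a Lorenz attractor for all $(\mu,\varepsilon)\in V_{LA}$.
   Context: Lorenz attractor (Afraimovich–Bykov–Shilnikov sense): with $\Pi$ a cross-section transverse to $W^s(O)$, $\Pi_0$ its first intersection with $W^s(O)$ splitting $\Pi$ into $\Pi_\pm=\{\pm u>0\}$, the system possesses a Lorenz attractor if both unstable separatrices hit $\Pi$ and there is a closed region $D\subset\Pi$ with $T(D\setminus\Pi_0)\subset\mathrm{int}(D)$ for the Poincaré map $T:\ \bar u=f_\pm(u,v),\ \bar v=g_\pm(u,v)$ on $\Pi_\pm$, satisfying $$\|(f'_u)^{-1}\|_\circ<1,\quad \|g'_v\|_\circ<1,\quad \|g'_u(f'_u)^{-1}\|_\circ\,\|f'_v\|_\circ<(1-\|(f'_u)^{-1}\|_\circ)(1-\|g'_v\|_\circ),$$ with $\|\cdot\|_\circ=\sup_{D\cap\Pi_\pm}\|\cdot\|$. The separatrix value $A$ is the coefficient of $|u|^{\nu}$, $\nu=|\lambda_1|/\gamma$, in the asymptotics $\bar u=u_++A|u|^\nu+o(|u|^\nu)$ of the Poincaré map near $\Pi_0$ on the side $u>0$; in the parametrised family $\mu=u_+$ is the splitting of the loops and $\nu=1-\varepsilon$. *)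

theory Defs
  imports "HOL-Analysis.Analysis"
begin

text \<open>Cross-section coordinates: a point of the cross-section is a pair (u,v) with
  u :: real (the coordinate along e_1) and v in the (n-1)-dimensional v-space 'v.
  The local stable manifold trace is Pi_0 = {u = 0}.\<close>

definition Pi0 :: "(real \<times> 'v) set" where
  "Pi0 = {x. fst x = 0}"

definition poincare_map ::
  "(real \<times> real \<Rightarrow> real) \<Rightarrow> (real \<times> real \<Rightarrow> 'v::real_vector) \<Rightarrow> (real \<times> real \<Rightarrow> 'v)
   \<Rightarrow> ('v \<Rightarrow> 'v) \<Rightarrow> (real \<Rightarrow> 'v \<Rightarrow> real \<times> real \<Rightarrow> real) \<Rightarrow> (real \<Rightarrow> 'v \<Rightarrow> real \<times> real \<Rightarrow> 'v)
   \<Rightarrow> real \<times> real \<Rightarrow> real \<times> 'v \<Rightarrow> real \<times> 'v" where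
  "poincare_map A B vp Q p q par = (\<lambda>(u, v).
     let Qs = (if u > 0 then id else Q); w = Qs v; eps = snd par in
     ((fst par + A par * \<bar>u\<bar> powr (1 - eps) + p \<bar>u\<bar> w par) * sgn u,
      Qs (vp par + (\<bar>u\<bar> powr (1 - eps)) *\<^sub>R B par + q \<bar>u\<bar> w par)))"

text \<open>Lorenz attractor in the Afraimovich-Bykov-Shilnikov sense for a Poincare map T on
  the cross-section Pi, where Pp, Pm are the points where the two unstable separatrices
  hit Pi.  D is a closed region (closure of a nonempty connected open set) in Pi with
  T(D - Pi0) in int D, and the hyperbolicity conditions hold with the sup-norms over
  D - Pi0 = (D n Pi_+) u (D n Pi_-); "sup <= a" is written as a uniform bound a.
  For the derivative DT x of T at x: f'_u = fst (DT x (1,0)), f'_v = fst o DT x o (0,_),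
  g'_u = snd (DT x (1,0)), g'_v = snd o DT x o (0,_).\<close>

definition lorenz_attractor ::
  "(real \<times> 'v::real_normed_vector) set \<Rightarrow> (real \<times> 'v \<Rightarrow> real \<times> 'v) \<Rightarrow> real \<times> 'v \<Rightarrow> real \<times> 'v \<Rightarrow> bool"
  where
  "lorenz_attractor S T Pp Pm \<longleftrightarrow>
     Pp \<in> S \<and> Pm \<in> S \<and>
     (\<exists>D. closed D \<and> D \<subseteq> S \<and> interior D \<noteq> {} \<and> connected (interior D) \<and>
          closure (interior D) = D \<and>
          T ` (D - Pi0) \<subseteq> interior D \<and>
          (\<exists>DT a b c d. a < 1 \<and> b < 1 \<and> c * d < (1 - a) * (1 - b) \<and>
             (\<forall>x \<in> D - Pi0.
                (T has_derivative DT x) (at x) \<and>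
                fst (DT x (1, 0)) \<noteq> 0 \<and>
                1 / \<bar>fst (DT x (1, 0))\<bar> \<le> a \<and>
                onorm (\<lambda>k. snd (DT x (0, k))) \<le> b \<and>
                norm (snd (DT x (1, 0))) / \<bar>fst (DT x (1, 0))\<bar> \<le> c \<and>
                onorm (\<lambda>k. fst (DT x (0, k))) \<le> d)))"

end

theory Submission
  imports Defs
begin


lemma powr_lin_deriv:
  fixes s u \<nu> :: real
  assumes "s * u > 0"
  shows "((\<lambda>(y::real, w::'v::real_normed_vector). (s*y) powr \<nu>) has_derivative
          (\<lambda>(h, k). h * (s * \<nu> * (s*u) powr (\<nu> - 1)))) (at (u, v))"
proof -
  have "((\<lambda>z::real\<times>'v. (s * fst z) powr \<nu>) has_derivative
         (\<lambda>h. ((s*u) powr \<nu>) * ((\<lambda>_. 0) h * ln (s*u) + (s * fst h) * \<nu> / (s*u)))) (at (u,v))"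
    using assms by (intro derivative_eq_intros) auto
  moreover have "(\<lambda>h::real\<times>'v. ((s*u) powr \<nu>) * (0 * ln (s*u) + (s * fst h) * \<nu> / (s*u)))
        = (\<lambda>(h, k). h * (s * \<nu> * (s*u) powr (\<nu> - 1)))"
    using assms by (auto simp: fun_eq_iff powr_diff field_simps)
  ultimately show ?thesis by (simp add: case_prod_beta')
qed

lemma local_deriv:
  fixes s u \<mu> a \<nu> :: real and L :: "'v::euclidean_space \<Rightarrow> 'v"
    and P :: "real \<Rightarrow> 'v \<Rightarrow> real" and Qf :: "real \<Rightarrow> 'v \<Rightarrow> 'v"
    and Pv :: "'v \<Rightarrow> real" and Qv :: "'v \<Rightarrow> 'v"
  assumes s2: "s * s = 1" and su: "s * u > 0" and L: "linear L"
    and Pv: "bounded_linear Pv" and Qv: "bounded_linear Qv"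
    and pd: "((\<lambda>(y, w). P y w) has_derivative (\<lambda>(h, k). h * Pu + Pv k)) (at (s*u, L v))"
    and qd: "((\<lambda>(y, w). Qf y w) has_derivative (\<lambda>(h, k). h *\<^sub>R Qu + Qv k)) (at (s*u, L v))"
  shows "((\<lambda>(y, w). (s * (\<mu> + a * (s*y) powr \<nu> + P (s*y) (L w)),
                     L (vp + ((s*y) powr \<nu>) *\<^sub>R B + Qf (s*y) (L w))))
     has_derivative (\<lambda>(h, k). (h * (a * \<nu> * (s*u) powr (\<nu> - 1) + Pu) + s * Pv (L k),
          L ((s * h * \<nu> * (s*u) powr (\<nu> - 1)) *\<^sub>R B + (s * h) *\<^sub>R Qu + Qv (L k))))) (at (u, v))"
proof -
  have bL: "bounded_linear L" using L by (simp add: linear_conv_bounded_linear)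
  have G: "((\<lambda>(y::real, w). (s*y, L w)) has_derivative (\<lambda>(h::real, k). (s*h, L k))) (at (u,v))"
  proof -
    have "bounded_linear (\<lambda>(h::real, k). (s*h, L k))"
      using bL by (auto intro!: bounded_linear_Pair bounded_linear_compose[OF bL] bounded_linear_fst bounded_linear_snd bounded_linear_mult_right bounded_linear_compose[OF bounded_linear_mult_right bounded_linear_fst] simp: case_prod_beta')
    then show ?thesis by (simp add: bounded_linear_imp_has_derivative)
  qed
  have P1: "((\<lambda>z. (\<lambda>(y, w). P y w) ((\<lambda>(y, w). (s*y, L w)) z)) has_derivative
      (\<lambda>z. (\<lambda>(h, k). h * Pu + Pv k) ((\<lambda>(h, k). (s*h, L k)) z))) (at (u,v))"
    by (rule has_derivative_compose[OF G]) (simp add: pd)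
  have Q1: "((\<lambda>z. (\<lambda>(y, w). Qf y w) ((\<lambda>(y, w). (s*y, L w)) z)) has_derivative
      (\<lambda>z. (\<lambda>(h, k). h *\<^sub>R Qu + Qv k) ((\<lambda>(h, k). (s*h, L k)) z))) (at (u,v))"
    by (rule has_derivative_compose[OF G]) (simp add: qd)
  have R: "((\<lambda>(y::real, w::'v). (s*y) powr \<nu>) has_derivative
          (\<lambda>(h, k). h * (s * \<nu> * (s*u) powr (\<nu> - 1)))) (at (u, v))"
    by (rule powr_lin_deriv[OF su])
  have Ra: "((\<lambda>z. \<mu> + a * (\<lambda>(y, w). (s*y) powr \<nu>) z) has_derivative (\<lambda>z. a * (\<lambda>(h, k). h * (s * \<nu> * (s*u) powr (\<nu> - 1))) z)) (at (u,v))"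
    by (rule has_derivative_eq_rhs[OF has_derivative_add[OF has_derivative_const has_derivative_mult_right[OF R]]]) simp
  have Rb: "((\<lambda>z. vp + ((\<lambda>(y, w). (s*y) powr \<nu>) z) *\<^sub>R B) has_derivative (\<lambda>z. ((\<lambda>(h, k). h * (s * \<nu> * (s*u) powr (\<nu> - 1))) z) *\<^sub>R B)) (at (u,v))"
    by (rule has_derivative_eq_rhs[OF has_derivative_add[OF has_derivative_const has_derivative_scaleR_left[OF R]]]) simp
  have F1: "((\<lambda>z. s * (\<mu> + a * (\<lambda>(y, w). (s*y) powr \<nu>) z + (\<lambda>z. (\<lambda>(y, w). P y w) ((\<lambda>(y, w). (s*y, L w)) z)) z))
     has_derivative (\<lambda>z. s * (a * (\<lambda>(h, k). h * (s * \<nu> * (s*u) powr (\<nu> - 1))) z +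
        (\<lambda>z. (\<lambda>(h, k). h * Pu + Pv k) ((\<lambda>(h, k). (s*h, L k)) z)) z))) (at (u,v))"
    by (intro has_derivative_mult_right has_derivative_add Ra P1)
  have F2: "((\<lambda>z. L (vp + ((\<lambda>(y, w). (s*y) powr \<nu>) z) *\<^sub>R B + (\<lambda>z. (\<lambda>(y, w). Qf y w) ((\<lambda>(y, w). (s*y, L w)) z)) z))
     has_derivative (\<lambda>z. L (((\<lambda>(h, k). h * (s * \<nu> * (s*u) powr (\<nu> - 1))) z) *\<^sub>R B +
        (\<lambda>z. (\<lambda>(h, k). h *\<^sub>R Qu + Qv k) ((\<lambda>(h, k). (s*h, L k)) z)) z))) (at (u,v))"
    by (intro bounded_linear.has_derivative[OF bL] has_derivative_add Rb Q1)
  have "((\<lambda>z. (s * (\<mu> + a * (\<lambda>(y, w). (s*y) powr \<nu>) z + (\<lambda>z. (\<lambda>(y, w). P y w) ((\<lambda>(y, w). (s*y, L w)) z)) z),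
             L (vp + ((\<lambda>(y, w). (s*y) powr \<nu>) z) *\<^sub>R B + (\<lambda>z. (\<lambda>(y, w). Qf y w) ((\<lambda>(y, w). (s*y, L w)) z)) z)))
     has_derivative (\<lambda>z. (s * (a * (\<lambda>(h, k). h * (s * \<nu> * (s*u) powr (\<nu> - 1))) z +
        (\<lambda>z. (\<lambda>(h, k). h * Pu + Pv k) ((\<lambda>(h, k). (s*h, L k)) z)) z),
       L (((\<lambda>(h, k). h * (s * \<nu> * (s*u) powr (\<nu> - 1))) z) *\<^sub>R B +
        (\<lambda>z. (\<lambda>(h, k). h *\<^sub>R Qu + Qv k) ((\<lambda>(h, k). (s*h, L k)) z)) z)))) (at (u,v))"
    by (rule has_derivative_Pair[OF F1 F2])
  note th = this[unfolded case_prod_beta' fst_conv snd_conv]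
  show ?thesis unfolding case_prod_beta' fst_conv snd_conv
    by (rule has_derivative_eq_rhs[OF th]) (use s2 in \<open>auto simp: fun_eq_iff algebra_simps\<close>)
qed

lemma L_norm:
  fixes Q :: "'v::euclidean_space \<Rightarrow> 'v"
  assumes "linear Q"
  shows "norm ((if b then id else Q) k) \<le> max 1 (onorm Q) * norm k"
proof (cases b)
  case True
  have "1 * norm k \<le> max 1 (onorm Q) * norm k" by (intro mult_right_mono) auto
  then show ?thesis using True by simp
next
  case False
  have "norm (Q k) \<le> onorm Q * norm k"
    using assms by (intro onorm) (simp add: linear_conv_bounded_linear)
  also have "\<dots> \<le> max 1 (onorm Q) * norm k" by (intro mult_right_mono) auto
  finally show ?thesis using False by simp
qed

lemma T_deriv:
  fixes Q :: "'v::euclidean_space \<Rightarrow> 'v"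
    and A :: "real \<times> real \<Rightarrow> real"
    and B vp :: "real \<times> real \<Rightarrow> 'v"
    and p pu :: "real \<Rightarrow> 'v \<Rightarrow> real \<times> real \<Rightarrow> real"
    and q qu :: "real \<Rightarrow> 'v \<Rightarrow> real \<times> real \<Rightarrow> 'v"
    and pv :: "real \<Rightarrow> 'v \<Rightarrow> real \<times> real \<Rightarrow> ('v \<Rightarrow>\<^sub>L real)"
    and qv :: "real \<Rightarrow> 'v \<Rightarrow> real \<times> real \<Rightarrow> ('v \<Rightarrow>\<^sub>L 'v)"
  assumes Q_lin: "linear Q"
    and u0: "u \<noteq> 0"
    and pd: "((\<lambda>(y, w). p y w (\<mu>, \<epsilon>)) has_derivative
           (\<lambda>(h, k). h * pu \<bar>u\<bar> ((if u > 0 then id else Q) v) (\<mu>, \<epsilon>) + blinfun_apply (pv \<bar>u\<bar> ((if u > 0 then id else Q) v) (\<mu>, \<epsilon>)) k)) (at (\<bar>u\<bar>, (if u > 0 then id else Q) v))"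
    and qd: "((\<lambda>(y, w). q y w (\<mu>, \<epsilon>)) has_derivative
           (\<lambda>(h, k). h *\<^sub>R qu \<bar>u\<bar> ((if u > 0 then id else Q) v) (\<mu>, \<epsilon>) + blinfun_apply (qv \<bar>u\<bar> ((if u > 0 then id else Q) v) (\<mu>, \<epsilon>)) k)) (at (\<bar>u\<bar>, (if u > 0 then id else Q) v))"
  shows "(poincare_map A B vp Q p q (\<mu>, \<epsilon>) has_derivative
     (\<lambda>(h, k). let s = sgn u; L = (if u > 0 then id else Q); x = \<bar>u\<bar>; w = L v in
       (h * (A (\<mu>, \<epsilon>) * (1 - \<epsilon>) * x powr (- \<epsilon>) + pu x w (\<mu>, \<epsilon>)) + s * blinfun_apply (pv x w (\<mu>, \<epsilon>)) (L k),
        L ((s * h * (1 - \<epsilon>) * x powr (- \<epsilon>)) *\<^sub>R B (\<mu>, \<epsilon>) + (s * h) *\<^sub>R qu x w (\<mu>, \<epsilon>) + blinfun_apply (qv x w (\<mu>, \<epsilon>)) (L k))))) (at (u, v))"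
proof -
  define s where "s = sgn u"
  define L where "L = (if u > 0 then id else Q)"
  have s2: "s * s = 1" using u0 by (auto simp: s_def sgn_if)
  have su: "s * u > 0" "s * u = \<bar>u\<bar>" using u0 by (auto simp: s_def sgn_if)
  have L: "linear L" using Q_lin by (auto simp: L_def linear_id)
  have D: "((\<lambda>(y, w). (s * (\<mu> + A (\<mu>, \<epsilon>) * (s*y) powr (1 - \<epsilon>) + p (s*y) (L w) (\<mu>, \<epsilon>)),
                     L (vp (\<mu>, \<epsilon>) + ((s*y) powr (1 - \<epsilon>)) *\<^sub>R B (\<mu>, \<epsilon>) + q (s*y) (L w) (\<mu>, \<epsilon>))))
     has_derivative (\<lambda>(h, k). (h * (A (\<mu>, \<epsilon>) * (1 - \<epsilon>) * (s*u) powr ((1 - \<epsilon>) - 1) + pu \<bar>u\<bar> (L v) (\<mu>, \<epsilon>)) + s * blinfun_apply (pv \<bar>u\<bar> (L v) (\<mu>, \<epsilon>)) (L k),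
          L ((s * h * (1 - \<epsilon>) * (s*u) powr ((1 - \<epsilon>) - 1)) *\<^sub>R B (\<mu>, \<epsilon>) + (s * h) *\<^sub>R qu \<bar>u\<bar> (L v) (\<mu>, \<epsilon>) + blinfun_apply (qv \<bar>u\<bar> (L v) (\<mu>, \<epsilon>)) (L k))))) (at (u, v))"
    by (rule local_deriv[OF s2 su(1) L bounded_linear_blinfun_apply bounded_linear_blinfun_apply])
       (use pd qd in \<open>simp_all add: su(2) L_def\<close>)
  have D2: "((\<lambda>(y, w). (s * (\<mu> + A (\<mu>, \<epsilon>) * (s*y) powr (1 - \<epsilon>) + p (s*y) (L w) (\<mu>, \<epsilon>)),
                     L (vp (\<mu>, \<epsilon>) + ((s*y) powr (1 - \<epsilon>)) *\<^sub>R B (\<mu>, \<epsilon>) + q (s*y) (L w) (\<mu>, \<epsilon>))))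
     has_derivative (\<lambda>(h, k). let s = sgn u; L = (if u > 0 then id else Q); x = \<bar>u\<bar>; w = L v in
       (h * (A (\<mu>, \<epsilon>) * (1 - \<epsilon>) * x powr (- \<epsilon>) + pu x w (\<mu>, \<epsilon>)) + s * blinfun_apply (pv x w (\<mu>, \<epsilon>)) (L k),
        L ((s * h * (1 - \<epsilon>) * x powr (- \<epsilon>)) *\<^sub>R B (\<mu>, \<epsilon>) + (s * h) *\<^sub>R qu x w (\<mu>, \<epsilon>) + blinfun_apply (qv x w (\<mu>, \<epsilon>)) (L k))))) (at (u, v))"
    by (rule has_derivative_eq_rhs[OF D]) (simp add: fun_eq_iff su(2) s_def[symmetric] L_def Let_def)
  show ?thesis
  proof (rule has_derivative_transform_within_open[OF D2, of "{z. s * fst z > 0}"])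
    show "open {z::real\<times>'v. s * fst z > 0}"
      by (rule open_Collect_less) (intro continuous_intros)+
    show "(u, v) \<in> {z. s * fst z > 0}" using su by simp
  next
    fix z :: "real \<times> 'v" assume "z \<in> {z. s * fst z > 0}"
    then obtain y w where z: "z = (y, w)" and sy: "s * y > 0" by (cases z) auto
    have "sgn y = s \<and> (0 < y) = (0 < u) \<and> \<bar>y\<bar> = s * y"
    proof (cases "u > 0")
      case True then have "s = 1" by (simp add: s_def)
      then show ?thesis using sy True by auto
    next
      case False then have "u < 0" "s = -1" using u0 by (auto simp: s_def)
      then show ?thesis using sy by auto
    qed
    then show "(\<lambda>(y, w). (s * (\<mu> + A (\<mu>, \<epsilon>) * (s*y) powr (1 - \<epsilon>) + p (s*y) (L w) (\<mu>, \<epsilon>)),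
                     L (vp (\<mu>, \<epsilon>) + ((s*y) powr (1 - \<epsilon>)) *\<^sub>R B (\<mu>, \<epsilon>) + q (s*y) (L w) (\<mu>, \<epsilon>)))) z =
          poincare_map A B vp Q p q (\<mu>, \<epsilon>) z"
      by (simp add: z poincare_map_def Let_def L_def mult.commute)
  qed
qed

lemma lorenz_generic:
  fixes Q :: "'v::euclidean_space \<Rightarrow> 'v"
    and W K :: "'v set" and vcen :: 'v
    and \<delta> \<mu> \<epsilon> U r \<eta> a b c d :: real
    and A :: "real \<times> real \<Rightarrow> real"
    and B vp :: "real \<times> real \<Rightarrow> 'v"
    and p pu :: "real \<Rightarrow> 'v \<Rightarrow> real \<times> real \<Rightarrow> real"
    and q qu :: "real \<Rightarrow> 'v \<Rightarrow> real \<times> real \<Rightarrow> 'v"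
    and pv :: "real \<Rightarrow> 'v \<Rightarrow> real \<times> real \<Rightarrow> ('v \<Rightarrow>\<^sub>L real)"
    and qv :: "real \<Rightarrow> 'v \<Rightarrow> real \<times> real \<Rightarrow> ('v \<Rightarrow>\<^sub>L 'v)"
  assumes Q_lin: "linear Q"
    and W_sym: "Q ` W = W"
    and p_deriv: "\<And>x v. 0 < x \<Longrightarrow> x < \<delta> \<Longrightarrow> v \<in> W \<Longrightarrow>
        ((\<lambda>(y, w). p y w (\<mu>, \<epsilon>)) has_derivative
           (\<lambda>(h, k). h * pu x v (\<mu>, \<epsilon>) + blinfun_apply (pv x v (\<mu>, \<epsilon>)) k)) (at (x, v))"
    and q_deriv: "\<And>x v. 0 < x \<Longrightarrow> x < \<delta> \<Longrightarrow> v \<in> W \<Longrightarrow>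
        ((\<lambda>(y, w). q y w (\<mu>, \<epsilon>)) has_derivative
           (\<lambda>(h, k). h *\<^sub>R qu x v (\<mu>, \<epsilon>) + blinfun_apply (qv x v (\<mu>, \<epsilon>)) k)) (at (x, v))"
    and K: "closed K" "convex K" "K \<subseteq> W" "0 < r" "ball vcen r \<subseteq> K" "ball (Q vcen) r \<subseteq> K"
    and U: "0 < U" "U < \<delta>" "\<bar>\<mu>\<bar> < \<delta>" "\<epsilon> < 1"
    and bnd: "\<And>x v. 0 < x \<Longrightarrow> x \<le> U \<Longrightarrow> v \<in> W \<Longrightarrow>
          \<bar>p x v (\<mu>, \<epsilon>)\<bar> \<le> \<eta> * x powr (1 - \<epsilon>) \<and>
          norm (q x v (\<mu>, \<epsilon>)) \<le> \<eta> * x powr (1 - \<epsilon>) \<and>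
          norm (pv x v (\<mu>, \<epsilon>)) \<le> \<eta> * x powr (1 - \<epsilon>) \<and>
          norm (qv x v (\<mu>, \<epsilon>)) \<le> \<eta> * x powr (1 - \<epsilon>) \<and>
          \<bar>pu x v (\<mu>, \<epsilon>)\<bar> \<le> \<eta> * x powr (- \<epsilon>) \<and>
          norm (qu x v (\<mu>, \<epsilon>)) \<le> \<eta> * x powr (- \<epsilon>)"
    and hU: "\<And>x P. 0 < x \<Longrightarrow> x \<le> U \<Longrightarrow> \<bar>P\<bar> \<le> \<eta> * x powr (1 - \<epsilon>) \<Longrightarrow>
          \<bar>\<mu> + A (\<mu>, \<epsilon>) * x powr (1 - \<epsilon>) + P\<bar> < U"
    and hv: "\<And>x z. 0 < x \<Longrightarrow> x \<le> U \<Longrightarrow> norm z \<le> \<eta> * x powr (1 - \<epsilon>) \<Longrightarrow>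
          norm (vp (\<mu>, \<epsilon>) + x powr (1 - \<epsilon>) *\<^sub>R B (\<mu>, \<epsilon>) + z - vcen) < r / max 1 (onorm Q)"
    and hf: "\<And>x P. 0 < x \<Longrightarrow> x \<le> U \<Longrightarrow> \<bar>P\<bar> \<le> \<eta> * x powr (- \<epsilon>) \<Longrightarrow>
          1 \<le> a * \<bar>A (\<mu>, \<epsilon>) * (1 - \<epsilon>) * x powr (- \<epsilon>) + P\<bar>"
    and hc: "\<And>x P G. 0 < x \<Longrightarrow> x \<le> U \<Longrightarrow> \<bar>P\<bar> \<le> \<eta> * x powr (- \<epsilon>) \<Longrightarrow>
          G \<le> max 1 (onorm Q) * (((1 - \<epsilon>) * norm (B (\<mu>, \<epsilon>)) + \<eta>) * x powr (- \<epsilon>)) \<Longrightarrow>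
          G \<le> c * \<bar>A (\<mu>, \<epsilon>) * (1 - \<epsilon>) * x powr (- \<epsilon>) + P\<bar>"
    and hb: "\<And>x. 0 < x \<Longrightarrow> x \<le> U \<Longrightarrow> max 1 (onorm Q) * (max 1 (onorm Q) * (\<eta> * x powr (1 - \<epsilon>))) \<le> b"
    and hd: "\<And>x. 0 < x \<Longrightarrow> x \<le> U \<Longrightarrow> max 1 (onorm Q) * (\<eta> * x powr (1 - \<epsilon>)) \<le> d"
    and habcd: "a < 1" "b < 1" "c * d < (1 - a) * (1 - b)"
    and vpW: "vp (\<mu>, \<epsilon>) \<in> W"
  shows "lorenz_attractor {(u, v). \<bar>u\<bar> < \<delta> \<and> v \<in> W}
                (poincare_map A B vp Q p q (\<mu>, \<epsilon>))
                (\<mu>, vp (\<mu>, \<epsilon>)) (- \<mu>, Q (vp (\<mu>, \<epsilon>)))"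
proof -
  define nQ where "nQ = max 1 (onorm Q)"
  have nQ1: "nQ \<ge> 1" by (simp add: nQ_def)
  define T where "T = poincare_map A B vp Q p q (\<mu>, \<epsilon>)"
  define D where "D = {-U..U} \<times> K"
  define DT where "DT = (\<lambda>(u::real, v::'v). (\<lambda>(h::real, k::'v). let s = sgn u; L = (if u > 0 then id else Q); x = \<bar>u\<bar>; w = L v in
       (h * (A (\<mu>, \<epsilon>) * (1 - \<epsilon>) * x powr (- \<epsilon>) + pu x w (\<mu>, \<epsilon>)) + s * blinfun_apply (pv x w (\<mu>, \<epsilon>)) (L k),
        L ((s * h * (1 - \<epsilon>) * x powr (- \<epsilon>)) *\<^sub>R B (\<mu>, \<epsilon>) + (s * h) *\<^sub>R qu x w (\<mu>, \<epsilon>) + blinfun_apply (qv x w (\<mu>, \<epsilon>)) (L k)))))"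
  have QW: "\<And>v. v \<in> W \<Longrightarrow> Q v \<in> W" using W_sym by blast
  have LW: "\<And>v bb. v \<in> W \<Longrightarrow> (if bb then id else Q) v \<in> W" using QW by auto
  have Lnorm: "\<And>k bb. norm ((if bb then id else Q) k) \<le> nQ * norm k"
    unfolding nQ_def by (rule L_norm[OF Q_lin])
  have Q0: "Q 0 = 0" using Q_lin by (simp add: linear_0)
  have ballint: "ball vcen r \<subseteq> interior K" "ball (Q vcen) r \<subseteq> interior K"
    using K by (meson interior_maximal open_ball)+
  have intK: "interior K \<noteq> {}" using ballint K(4) by (auto dest!: subsetD[of _ _ vcen])
  have intD: "interior D = {-U<..<U} \<times> interior K" by (simp add: D_def interior_Times)
  have clD: "closure (interior D) = D"
    unfolding intD using K U intK by (simp add: closure_Times D_def convex_closure_interior closure_closed)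
  have Timg: "T z \<in> interior D" if z: "z \<in> D - Pi0" for z
  proof -
    obtain u v where zz: "z = (u, v)" by (cases z)
    have u0: "u \<noteq> 0" "\<bar>u\<bar> \<le> U" "v \<in> K" using z by (auto simp: zz D_def Pi0_def)
    define L where "L = (if u > 0 then id else Q)"
    have w: "L v \<in> W" using u0 K QW by (auto simp: L_def)
    have x: "0 < \<bar>u\<bar>" "\<bar>u\<bar> \<le> U" using u0 by auto
    note bb = bnd[OF x w]
    have Tz: "T z = ((\<mu> + A (\<mu>, \<epsilon>) * \<bar>u\<bar> powr (1 - \<epsilon>) + p \<bar>u\<bar> (L v) (\<mu>, \<epsilon>)) * sgn u,
        L (vp (\<mu>, \<epsilon>) + \<bar>u\<bar> powr (1 - \<epsilon>) *\<^sub>R B (\<mu>, \<epsilon>) + q \<bar>u\<bar> (L v) (\<mu>, \<epsilon>)))"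
      by (simp add: zz T_def poincare_map_def Let_def L_def)
    have f: "\<bar>fst (T z)\<bar> < U"
      using hU[OF x, of "p \<bar>u\<bar> (L v) (\<mu>, \<epsilon>)"] bb u0 by (simp add: Tz abs_mult abs_sgn_eq)
    define y where "y = vp (\<mu>, \<epsilon>) + \<bar>u\<bar> powr (1 - \<epsilon>) *\<^sub>R B (\<mu>, \<epsilon>) + q \<bar>u\<bar> (L v) (\<mu>, \<epsilon>)"
    have yn: "norm (y - vcen) < r / nQ" unfolding y_def nQ_def by (rule hv[OF x]) (use bb in simp)
    have "snd (T z) \<in> interior K"
    proof (cases "u > 0")
      case True
      have "r / nQ \<le> r" using nQ1 K(4) by (simp add: divide_le_eq)
      then have "norm (y - vcen) < r" using yn by linarith
      then have "y \<in> ball vcen r" by (simp add: dist_norm norm_minus_commute)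
      then show ?thesis using ballint True by (auto simp: Tz L_def y_def)
    next
      case False
      have "norm (Q y - Q vcen) = norm (Q (y - vcen))" using Q_lin by (simp add: linear_diff)
      also have "\<dots> \<le> nQ * norm (y - vcen)" using Lnorm[of False "y - vcen"] by simp
      also have "\<dots> < nQ * (r / nQ)" using yn nQ1 by (intro mult_strict_left_mono) auto
      also have "\<dots> = r" using nQ1 by simp
      finally have "Q y \<in> ball (Q vcen) r" by (simp add: dist_norm norm_minus_commute)
      then show ?thesis using ballint False by (auto simp: Tz L_def y_def)
    qed
    then show ?thesis using f by (cases "T z") (auto simp: intD)
  qed
  have Dprops: "(T has_derivative DT z) (at z) \<and>
                fst (DT z (1, 0)) \<noteq> 0 \<and>
                1 / \<bar>fst (DT z (1, 0))\<bar> \<le> a \<and>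
                onorm (\<lambda>k. snd (DT z (0, k))) \<le> b \<and>
                norm (snd (DT z (1, 0))) / \<bar>fst (DT z (1, 0))\<bar> \<le> c \<and>
                onorm (\<lambda>k. fst (DT z (0, k))) \<le> d" if z: "z \<in> D - Pi0" for z
  proof -
    obtain u v where zz: "z = (u, v)" by (cases z)
    have u0: "u \<noteq> 0" "\<bar>u\<bar> \<le> U" "v \<in> K" using z by (auto simp: zz D_def Pi0_def)
    define L where "L = (if u > 0 then id else Q)"
    define s where "s = sgn u"
    have s1: "\<bar>s\<bar> = 1" using u0 by (simp add: s_def abs_sgn_eq)
    have w: "L v \<in> W" using u0 K QW by (auto simp: L_def)
    have x: "0 < \<bar>u\<bar>" "\<bar>u\<bar> \<le> U" using u0 by auto
    have xd: "\<bar>u\<bar> < \<delta>" using x U by linarith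
    note bb = bnd[OF x w]
    have e0: "0 \<le> \<eta> * \<bar>u\<bar> powr (1 - \<epsilon>)" using bb by (meson norm_ge_zero order_trans)
    have LnK: "\<And>k. norm (L k) \<le> nQ * norm k" unfolding L_def by (rule Lnorm)
    have L0: "L 0 = 0" using Q0 by (simp add: L_def)
    have deriv: "(T has_derivative DT z) (at z)"
      unfolding T_def DT_def zz prod.case
      by (rule T_deriv[OF Q_lin u0(1)]) (use p_deriv[OF x(1) xd w] q_deriv[OF x(1) xd w] in \<open>simp_all add: L_def\<close>)
    define f where "f = A (\<mu>, \<epsilon>) * (1 - \<epsilon>) * \<bar>u\<bar> powr (- \<epsilon>) + pu \<bar>u\<bar> (L v) (\<mu>, \<epsilon>)"
    have f1: "fst (DT z (1, 0)) = f" by (simp add: DT_def zz Let_def f_def L_def[symmetric] s_def[symmetric] L0)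
    have hf': "1 \<le> a * \<bar>f\<bar>" unfolding f_def by (rule hf[OF x]) (use bb in simp)
    have fnz: "f \<noteq> 0" using hf' by auto
    have fa: "1 / \<bar>f\<bar> \<le> a" using hf' fnz by (simp add: divide_le_eq mult.commute)
    define G where "G = (s * (1 - \<epsilon>) * \<bar>u\<bar> powr (- \<epsilon>)) *\<^sub>R B (\<mu>, \<epsilon>) + s *\<^sub>R qu \<bar>u\<bar> (L v) (\<mu>, \<epsilon>)"
    have g1: "snd (DT z (1, 0)) = L G" by (simp add: DT_def zz Let_def G_def L_def[symmetric] s_def[symmetric] L0)
    have "norm G \<le> norm ((s * (1 - \<epsilon>) * \<bar>u\<bar> powr (- \<epsilon>)) *\<^sub>R B (\<mu>, \<epsilon>)) + norm (s *\<^sub>R qu \<bar>u\<bar> (L v) (\<mu>, \<epsilon>))"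
      unfolding G_def by (rule norm_triangle_ineq)
    also have "\<dots> = (1 - \<epsilon>) * \<bar>u\<bar> powr (- \<epsilon>) * norm (B (\<mu>, \<epsilon>)) + norm (qu \<bar>u\<bar> (L v) (\<mu>, \<epsilon>))"
      using s1 U(4) by (simp add: abs_mult)
    also have "\<dots> \<le> (1 - \<epsilon>) * \<bar>u\<bar> powr (- \<epsilon>) * norm (B (\<mu>, \<epsilon>)) + \<eta> * \<bar>u\<bar> powr (- \<epsilon>)"
      using bb by simp
    finally have Gn: "norm G \<le> ((1 - \<epsilon>) * norm (B (\<mu>, \<epsilon>)) + \<eta>) * \<bar>u\<bar> powr (- \<epsilon>)"
      by (simp add: algebra_simps)
    have "norm (L G) \<le> nQ * norm G" unfolding L_def by (rule Lnorm)
    also have "\<dots> \<le> nQ * (((1 - \<epsilon>) * norm (B (\<mu>, \<epsilon>)) + \<eta>) * \<bar>u\<bar> powr (- \<epsilon>))"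
      using Gn nQ1 by (intro mult_left_mono) auto
    finally have "norm (L G) \<le> c * \<bar>f\<bar>" unfolding f_def
      by (intro hc[OF x]) (use bb in \<open>simp_all add: nQ_def\<close>)
    then have gc: "norm (L G) / \<bar>f\<bar> \<le> c" using fnz by (simp add: divide_le_eq)
    have b1: "onorm (\<lambda>k. snd (DT z (0, k))) \<le> b"
    proof -
      have "onorm (\<lambda>k. snd (DT z (0, k))) \<le> nQ * (nQ * (\<eta> * \<bar>u\<bar> powr (1 - \<epsilon>)))"
      proof (rule onorm_le)
        fix k
        have "snd (DT z (0, k)) = L (blinfun_apply (qv \<bar>u\<bar> (L v) (\<mu>, \<epsilon>)) (L k))"
          by (simp add: DT_def zz Let_def L_def[symmetric] s_def[symmetric])
        also have "norm \<dots> \<le> nQ * norm (blinfun_apply (qv \<bar>u\<bar> (L v) (\<mu>, \<epsilon>)) (L k))"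
          unfolding L_def by (rule Lnorm)
        also have "\<dots> \<le> nQ * (norm (qv \<bar>u\<bar> (L v) (\<mu>, \<epsilon>)) * norm (L k))"
          using nQ1 by (intro mult_left_mono norm_blinfun) auto
        also have "\<dots> \<le> nQ * ((\<eta> * \<bar>u\<bar> powr (1 - \<epsilon>)) * (nQ * norm k))"
          using nQ1 by (intro mult_left_mono mult_mono LnK) (use bb e0 in auto)
        finally show "norm (snd (DT z (0, k))) \<le> nQ * (nQ * (\<eta> * \<bar>u\<bar> powr (1 - \<epsilon>))) * norm k"
          by (simp add: algebra_simps)
      qed
      also have "\<dots> \<le> b" unfolding nQ_def by (rule hb[OF x])
      finally show ?thesis .
    qed
    have d1: "onorm (\<lambda>k. fst (DT z (0, k))) \<le> d"
    proof -
      have "onorm (\<lambda>k. fst (DT z (0, k))) \<le> nQ * (\<eta> * \<bar>u\<bar> powr (1 - \<epsilon>))"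
      proof (rule onorm_le)
        fix k
        have "fst (DT z (0, k)) = s * blinfun_apply (pv \<bar>u\<bar> (L v) (\<mu>, \<epsilon>)) (L k)"
          by (simp add: DT_def zz Let_def L_def[symmetric] s_def[symmetric])
        also have "norm \<dots> = norm (blinfun_apply (pv \<bar>u\<bar> (L v) (\<mu>, \<epsilon>)) (L k))"
          using s1 by (simp add: abs_mult)
        also have "\<dots> \<le> norm (pv \<bar>u\<bar> (L v) (\<mu>, \<epsilon>)) * norm (L k)"
          by (rule norm_blinfun)
        also have "\<dots> \<le> (\<eta> * \<bar>u\<bar> powr (1 - \<epsilon>)) * (nQ * norm k)"
          by (intro mult_mono LnK) (use bb e0 in auto)
        finally show "norm (fst (DT z (0, k))) \<le> nQ * (\<eta> * \<bar>u\<bar> powr (1 - \<epsilon>)) * norm k"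
          by (simp add: algebra_simps)
      qed
      also have "\<dots> \<le> d" unfolding nQ_def by (rule hd[OF x])
      finally show ?thesis .
    qed
    show ?thesis using deriv fnz fa gc b1 d1 f1 g1 by simp
  qed
  show ?thesis
    unfolding lorenz_attractor_def T_def[symmetric]
  proof (intro conjI exI[of _ D])
    show "(\<mu>, vp (\<mu>, \<epsilon>)) \<in> {(u, v). \<bar>u\<bar> < \<delta> \<and> v \<in> W}" using U vpW by simp
    show "(- \<mu>, Q (vp (\<mu>, \<epsilon>))) \<in> {(u, v). \<bar>u\<bar> < \<delta> \<and> v \<in> W}" using U vpW QW by simp
    show "closed D" using K by (simp add: D_def closed_Times)
    show "D \<subseteq> {(u, v). \<bar>u\<bar> < \<delta> \<and> v \<in> W}" using K U by (auto simp: D_def)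
    show "interior D \<noteq> {}" using intK U by (simp add: intD)
    show "connected (interior D)" unfolding intD
      using K by (intro convex_connected convex_Times) auto
    show "closure (interior D) = D" by (rule clD)
    show "T ` (D - Pi0) \<subseteq> interior D" using Timg by blast
    show "\<exists>DT a b c d. a < 1 \<and> b < 1 \<and> c * d < (1 - a) * (1 - b) \<and>
             (\<forall>x \<in> D - Pi0.
                (T has_derivative DT x) (at x) \<and>
                fst (DT x (1, 0)) \<noteq> 0 \<and>
                1 / \<bar>fst (DT x (1, 0))\<bar> \<le> a \<and>
                onorm (\<lambda>k. snd (DT x (0, k))) \<le> b \<and>
                norm (snd (DT x (1, 0))) / \<bar>fst (DT x (1, 0))\<bar> \<le> c \<and>
                onorm (\<lambda>k. fst (DT x (0, k))) \<le> d)"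
      using habcd Dprops by blast
  qed
qed


lemma num_basic:
  fixes a0 :: real
  defines "\<kappa> \<equiv> (max 1 a0 + 2) / 2"
  defines "s \<equiv> min (\<kappa> - 1) (1 - \<kappa> / 2) / 16"
  assumes a0: "0 < a0" "a0 < 2"
  shows "1 < \<kappa>" "\<kappa> < 2" "a0 < \<kappa>" "0 < s" "s \<le> 1/32"
    "1 < \<kappa> * (1 - 4 * s)" "- (\<kappa> / 2) + s + \<kappa> * (1 + s) * (1 + 2 * s) < 1" "\<kappa> / 2 + s < 1"
proof -
  show k1: "1 < \<kappa>" and k2: "\<kappa> < 2" and "a0 < \<kappa>" using a0 by (auto simp: \<kappa>_def max_def)
  show s0: "0 < s" using k1 k2 by (auto simp: s_def)
  have "min (\<kappa> - 1) (1 - \<kappa> / 2) \<le> 1 - \<kappa> / 2" by simp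
  then have "min (\<kappa> - 1) (1 - \<kappa> / 2) \<le> 1/2" using k1 by linarith
  then show s1: "s \<le> 1/32" unfolding s_def by simp
  have sa: "16 * s \<le> \<kappa> - 1" "16 * s \<le> 1 - \<kappa> / 2" by (auto simp: s_def)
  have "\<kappa> * s \<le> 2 * s" using k2 s0 by (intro mult_right_mono) auto
  moreover have "\<kappa> * (1 - 4 * s) = \<kappa> - 4 * (\<kappa> * s)" by (simp add: algebra_simps)
  ultimately show "1 < \<kappa> * (1 - 4 * s)" using sa s0 by linarith
  have e1: "\<kappa> * s \<le> 2 * s" using k2 s0 by (intro mult_right_mono) auto
  have e2: "\<kappa> * (s * s) \<le> 2 * (s * (1/32))" using k2 s0 s1
    by (intro mult_mono) (auto intro: mult_left_mono)
  have "\<kappa> * (1 + s) * (1 + 2 * s) = \<kappa> + 3 * (\<kappa> * s) + 2 * (\<kappa> * (s * s))" by (simp add: algebra_simps)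
  then show "- (\<kappa> / 2) + s + \<kappa> * (1 + s) * (1 + 2 * s) < 1" using e1 e2 sa s0 by linarith
  show "\<kappa> / 2 + s < 1" using sa s0 by linarith
qed

lemma arith_hU:
  fixes M a t P \<eta> U Y X \<kappa> s m :: real
  assumes t: "0 \<le> t" "t \<le> U * Y" and P: "\<bar>P\<bar> \<le> \<eta> * t"
    and eY: "\<eta> * Y \<le> 2 * s * X" and X: "X = a * Y" "X < \<kappa> * (1 + s)" and a: "\<eta> \<le> a"
    and U: "0 < U" and M: "- U * (m + s) < M" "M < U * (- m + s)"
    and num: "- m + s + \<kappa> * (1 + s) * (1 + 2 * s) < 1" "m + s < 1" and s: "0 \<le> s" and e: "0 \<le> \<eta>"
  shows "\<bar>M + a * t + P\<bar> < U"
proof -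
  have "M + a * t + P \<le> M + (a + \<eta>) * t" using P by (simp add: algebra_simps)
  also have "\<dots> \<le> M + (a + \<eta>) * (U * Y)" using t a e by (intro add_left_mono mult_left_mono) auto
  also have "\<dots> = M + U * (X + \<eta> * Y)" using X by (simp add: algebra_simps)
  also have "\<dots> \<le> M + U * (X * (1 + 2 * s))" using eY U by (intro add_left_mono mult_left_mono) (auto simp: algebra_simps)
  also have "\<dots> \<le> M + U * (\<kappa> * (1 + s) * (1 + 2 * s))"
    using X s U by (intro add_left_mono mult_left_mono mult_right_mono) auto
  also have "\<dots> < U * (- m + s) + U * (\<kappa> * (1 + s) * (1 + 2 * s))" using M by simp
  also have "\<dots> = U * (- m + s + \<kappa> * (1 + s) * (1 + 2 * s))" by (simp add: algebra_simps)
  also have "\<dots> < U * 1" using num U by (intro mult_strict_left_mono) auto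
  finally have up: "M + a * t + P < U" by simp
  have "(a - \<eta>) * t \<ge> 0" using a t by simp
  moreover have "(a - \<eta>) * t = a * t - \<eta> * t" by (simp add: algebra_simps)
  ultimately have "M + a * t + P \<ge> M" using P by linarith
  moreover have "- U * (m + s) \<ge> - U" using num U s by (simp add: mult_le_cancel_left1)
  ultimately show ?thesis using up M by linarith
qed


lemma abs_lower:
  fixes A P \<nu> z \<eta> :: real
  assumes "0 \<le> \<nu>" "0 < z" "\<bar>P\<bar> \<le> \<eta> * z"
  shows "(\<bar>A\<bar> * \<nu> - \<eta>) * z \<le> \<bar>A * \<nu> * z + P\<bar>"
proof -
  have "\<bar>A * \<nu> * z\<bar> = \<bar>A\<bar> * \<nu> * z" using assms by (simp add: abs_mult)
  then have "\<bar>A\<bar> * \<nu> * z - \<bar>P\<bar> \<le> \<bar>A * \<nu> * z + P\<bar>" by linarith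
  then show ?thesis using assms by (simp add: algebra_simps)
qed

lemma arith_hf:
  fixes A P \<nu> z \<eta> Y X s \<kappa> a' :: real
  assumes nu: "0 \<le> \<nu>" "1 - s \<le> \<nu>" and z: "0 < z" "Y \<le> z" and P: "\<bar>P\<bar> \<le> \<eta> * z"
    and X: "X = \<bar>A\<bar> * Y" "\<kappa> * (1 - s) < X" and eY: "\<eta> * Y \<le> 2 * s * X"
    and pos: "\<eta> \<le> \<bar>A\<bar> * \<nu>" and s: "0 \<le> s" "s \<le> 1/32" and k: "1 < \<kappa> * (1 - 4 * s)"
    and a': "a' = 1 / (\<kappa> * (1 - 4 * s))"
  shows "1 \<le> a' * \<bar>A * \<nu> * z + P\<bar>"
proof -
  have "0 < \<kappa> * (1 - 4 * s)" using k by linarith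
  then have k0: "0 < \<kappa>" using s by (auto simp: zero_less_mult_iff)
  have "\<kappa> * (1 - 4 * s) \<le> \<kappa> * ((1 - s) * (1 - 3 * s))"
    using k0 s by (intro mult_left_mono) (auto simp: algebra_simps)
  also have "\<dots> = \<kappa> * (1 - s) * (1 - 3 * s)" by simp
  also have "\<dots> \<le> X * (1 - 3 * s)" using X s by (intro mult_right_mono) auto
  also have "\<dots> \<le> X * \<nu> - 2 * s * X"
  proof -
    have "0 < \<kappa> * (1 - s)" using k0 s by simp
    then have "0 \<le> X" using X by linarith
    then have "X * (1 - s) \<le> X * \<nu>" using nu by (intro mult_left_mono) auto
    moreover have "X * (1 - 3 * s) = X * (1 - s) - 2 * s * X" by (simp add: algebra_simps)
    ultimately show ?thesis by linarith
  qed
  also have "\<dots> \<le> X * \<nu> - \<eta> * Y" using eY by simp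
  also have "\<dots> = (\<bar>A\<bar> * \<nu> - \<eta>) * Y" using X by (simp add: algebra_simps)
  also have "\<dots> \<le> (\<bar>A\<bar> * \<nu> - \<eta>) * z" using pos z by (intro mult_left_mono) auto
  also have "\<dots> \<le> \<bar>A * \<nu> * z + P\<bar>" by (rule abs_lower[OF nu(1) z(1) P])
  finally have "\<kappa> * (1 - 4 * s) \<le> \<bar>A * \<nu> * z + P\<bar>" .
  then show ?thesis using k by (simp add: a' divide_simps)
qed

lemma arith_hc:
  fixes A P \<nu> z \<eta> G nQ nb nb0 a0 c :: real
  assumes nu: "0 \<le> \<nu>" "\<nu> \<le> 1" and z: "0 < z" and P: "\<bar>P\<bar> \<le> \<eta> * z"
    and pos: "a0 / 8 \<le> \<bar>A\<bar> * \<nu> - \<eta>" and a0: "0 < a0" and nQ: "1 \<le> nQ"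
    and nb: "0 \<le> nb" "nb \<le> nb0 + 1" and e: "0 \<le> \<eta>" "\<eta> \<le> 1"
    and G: "G \<le> nQ * ((\<nu> * nb + \<eta>) * z)"
    and c: "c = 8 * nQ * (nb0 + 2) / a0"
  shows "G \<le> c * \<bar>A * \<nu> * z + P\<bar>"
proof -
  have "\<nu> * nb \<le> 1 * nb" using nu nb by (intro mult_right_mono) auto
  then have "\<nu> * nb + \<eta> \<le> nb0 + 2" using nb e by linarith
  then have "G \<le> nQ * ((nb0 + 2) * z)" using G nQ z
    by (meson order_trans mult_left_mono mult_right_mono less_imp_le zero_le_one order_trans)
  also have "\<dots> = c * (a0 / 8 * z)" using a0 by (simp add: c)
  also have "\<dots> \<le> c * ((\<bar>A\<bar> * \<nu> - \<eta>) * z)"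
  proof -
    have "0 \<le> nb0 + 2" using nb by linarith
    then have "0 \<le> c" using nQ a0 by (simp add: c)
    then show ?thesis using pos z by (intro mult_left_mono mult_right_mono) auto
  qed
  also have "\<dots> \<le> c * \<bar>A * \<nu> * z + P\<bar>"
  proof -
    have "0 \<le> nb0 + 2" using nb by linarith
    then have "0 \<le> c" using nQ a0 by (simp add: c)
    then show ?thesis by (intro mult_left_mono abs_lower[OF nu(1) z P])
  qed
  finally show ?thesis .
qed


theorem theorem2:
  fixes Q :: "'v::euclidean_space \<Rightarrow> 'v"
    and W :: "'v set"
    and \<delta> :: real
    and A :: "real \<times> real \<Rightarrow> real"
    and B vp :: "real \<times> real \<Rightarrow> 'v"
    and p pu :: "real \<Rightarrow> 'v \<Rightarrow> real \<times> real \<Rightarrow> real"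
    and q qu :: "real \<Rightarrow> 'v \<Rightarrow> real \<times> real \<Rightarrow> 'v"
    and pv :: "real \<Rightarrow> 'v \<Rightarrow> real \<times> real \<Rightarrow> ('v \<Rightarrow>\<^sub>L real)"
    and qv :: "real \<Rightarrow> 'v \<Rightarrow> real \<times> real \<Rightarrow> ('v \<Rightarrow>\<^sub>L 'v)"
  assumes Q_lin: "linear Q"
    and Q_inv: "\<And>v. Q (Q v) = v"
    and W_open: "open W" and W_convex: "convex W" and W_sym: "Q ` W = W"
    and vp_W: "vp (0, 0) \<in> W"
    and \<delta>_pos: "\<delta> > 0"
    and A_cont: "continuous_on UNIV A"
    and B_cont: "continuous_on UNIV B"
    and vp_cont: "continuous_on UNIV vp"
    and A_sep: "0 < \<bar>A (0, 0)\<bar>" "\<bar>A (0, 0)\<bar> < 2"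
    and p_deriv: "\<And>\<mu> \<epsilon> x v. \<bar>\<mu>\<bar> < \<delta> \<Longrightarrow> \<bar>\<epsilon>\<bar> < \<delta> \<Longrightarrow> 0 < x \<Longrightarrow> x < \<delta> \<Longrightarrow> v \<in> W \<Longrightarrow>
        ((\<lambda>(y, w). p y w (\<mu>, \<epsilon>)) has_derivative
           (\<lambda>(h, k). h * pu x v (\<mu>, \<epsilon>) + blinfun_apply (pv x v (\<mu>, \<epsilon>)) k)) (at (x, v))"
    and q_deriv: "\<And>\<mu> \<epsilon> x v. \<bar>\<mu>\<bar> < \<delta> \<Longrightarrow> \<bar>\<epsilon>\<bar> < \<delta> \<Longrightarrow> 0 < x \<Longrightarrow> x < \<delta> \<Longrightarrow> v \<in> W \<Longrightarrow>
        ((\<lambda>(y, w). q y w (\<mu>, \<epsilon>)) has_derivative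
           (\<lambda>(h, k). h *\<^sub>R qu x v (\<mu>, \<epsilon>) + blinfun_apply (qv x v (\<mu>, \<epsilon>)) k)) (at (x, v))"
    and small: "\<And>\<eta>. \<eta> > 0 \<Longrightarrow> \<exists>\<rho>>0. \<forall>\<mu> \<epsilon> x v.
        \<bar>\<mu>\<bar> < \<rho> \<and> \<bar>\<epsilon>\<bar> < \<rho> \<and> 0 < x \<and> x < \<rho> \<and> v \<in> W \<longrightarrow>
          \<bar>p x v (\<mu>, \<epsilon>)\<bar> \<le> \<eta> * x powr (1 - \<epsilon>) \<and>
          norm (q x v (\<mu>, \<epsilon>)) \<le> \<eta> * x powr (1 - \<epsilon>) \<and>
          norm (pv x v (\<mu>, \<epsilon>)) \<le> \<eta> * x powr (1 - \<epsilon>) \<and>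
          norm (qv x v (\<mu>, \<epsilon>)) \<le> \<eta> * x powr (1 - \<epsilon>) \<and>
          \<bar>pu x v (\<mu>, \<epsilon>)\<bar> \<le> \<eta> * x powr (- \<epsilon>) \<and>
          norm (qu x v (\<mu>, \<epsilon>)) \<le> \<eta> * x powr (- \<epsilon>)"
  shows "\<exists>V :: (real \<times> real) set. open V \<and> (0, 0) \<in> closure V \<and>
           (\<forall>(\<mu>, \<epsilon>) \<in> V.
              lorenz_attractor {(u, v). \<bar>u\<bar> < \<delta> \<and> v \<in> W}
                (poincare_map A B vp Q p q (\<mu>, \<epsilon>))
                (\<mu>, vp (\<mu>, \<epsilon>)) (- \<mu>, Q (vp (\<mu>, \<epsilon>))))"
proof -
  define a0 where "a0 = \<bar>A (0, 0)\<bar>"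
  define \<sigma> where "\<sigma> = sgn (A (0, 0))"
  have a0: "0 < a0" "a0 < 2" using A_sep by (auto simp: a0_def)
  define \<kappa> where "\<kappa> = (max 1 a0 + 2) / 2"
  define s where "s = min (\<kappa> - 1) (1 - \<kappa> / 2) / 16"
  define m where "m = \<kappa> / 2"
  note nb = num_basic[OF a0, folded \<kappa>_def, folded s_def]
  have \<sigma>2: "\<sigma> * \<sigma> = 1" using a0 by (auto simp: \<sigma>_def a0_def sgn_if)
  define nQ where "nQ = max 1 (onorm Q)"
  have nQ1: "1 \<le> nQ" by (simp add: nQ_def)
  define B0 where "B0 = B (0, 0)"
  define vp0 where "vp0 = vp (0, 0)"
  define nb0 where "nb0 = norm B0"
  define a' where "a' = 1 / (\<kappa> * (1 - 4 * s))"
  have a'1: "a' < 1" "0 < a'" using nb by (auto simp: a'_def divide_simps)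
  define \<eta> where "\<eta> = min (s * a0) (min (1 / (2 * nQ * nQ)) ((1 - a') * a0 / (32 * nQ * nQ * (nb0 + 2))))"
  have nb02: "0 < nb0 + 2" by (simp add: nb0_def add_nonneg_pos)
  have \<eta>0: "0 < \<eta>" using nb a0 nQ1 a'1 nb02 by (auto simp: \<eta>_def)
  have \<eta>1: "\<eta> \<le> s * a0" "\<eta> \<le> 1 / (2 * nQ * nQ)" "\<eta> \<le> (1 - a') * a0 / (32 * nQ * nQ * (nb0 + 2))"
    by (simp_all add: \<eta>_def)
  have sa0: "s * a0 \<le> (1/32) * a0" using nb a0 by (intro mult_right_mono) auto
  have \<eta>32: "\<eta> \<le> a0 / 32" "\<eta> \<le> 1" using \<eta>1(1) sa0 a0 by linarith+
  define b' where "b' = nQ * nQ * \<eta>"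
  define c' where "c' = 8 * nQ * (nb0 + 2) / a0"
  define d' where "d' = nQ * \<eta>"
  have b'1: "b' \<le> 1/2" using \<eta>1(2) nQ1 by (simp add: b'_def field_simps)
  have abcd: "c' * d' < (1 - a') * (1 - b')"
  proof -
    have "c' * d' = (8 * nQ * nQ * (nb0 + 2) / a0) * \<eta>" by (simp add: c'_def d'_def)
    also have "\<dots> \<le> (8 * nQ * nQ * (nb0 + 2) / a0) * ((1 - a') * a0 / (32 * nQ * nQ * (nb0 + 2)))"
      using \<eta>1(3) a0 nQ1 nb02 by (intro mult_left_mono) auto
    also have "\<dots> = (1 - a') / 4"
    proof -
      define k where "k = nQ * nQ * (nb0 + 2)"
      have k0: "k \<noteq> 0" using nQ1 nb02 by (simp add: k_def)
      have "(8 * nQ * nQ * (nb0 + 2) / a0) * ((1 - a') * a0 / (32 * nQ * nQ * (nb0 + 2)))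
          = (8 * k / a0) * ((1 - a') * a0 / (32 * k))" by (simp add: k_def algebra_simps)
      also have "\<dots> = (1 - a') / 4" using k0 a0 by (simp add: field_simps)
      finally show ?thesis .
    qed
    also have "\<dots> = (1 - a') * (1/4)" by simp
    also have "\<dots> < (1 - a') * (1 - b')" using a'1 b'1 by (intro mult_strict_left_mono) auto
    finally show ?thesis .
  qed
  obtain \<rho> where \<rho>: "\<rho> > 0" and \<rho>b: "\<forall>\<mu> \<epsilon> x v.
        \<bar>\<mu>\<bar> < \<rho> \<and> \<bar>\<epsilon>\<bar> < \<rho> \<and> 0 < x \<and> x < \<rho> \<and> v \<in> W \<longrightarrow>
          \<bar>p x v (\<mu>, \<epsilon>)\<bar> \<le> \<eta> * x powr (1 - \<epsilon>) \<and>
          norm (q x v (\<mu>, \<epsilon>)) \<le> \<eta> * x powr (1 - \<epsilon>) \<and>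
          norm (pv x v (\<mu>, \<epsilon>)) \<le> \<eta> * x powr (1 - \<epsilon>) \<and>
          norm (qv x v (\<mu>, \<epsilon>)) \<le> \<eta> * x powr (1 - \<epsilon>) \<and>
          \<bar>pu x v (\<mu>, \<epsilon>)\<bar> \<le> \<eta> * x powr (- \<epsilon>) \<and>
          norm (qu x v (\<mu>, \<epsilon>)) \<le> \<eta> * x powr (- \<epsilon>)"
    using small[OF \<eta>0] by blast
  define \<rho>1 where "\<rho>1 = min \<rho> (min \<delta> 1)"
  have \<rho>1: "0 < \<rho>1" "\<rho>1 \<le> \<rho>" "\<rho>1 \<le> \<delta>" "\<rho>1 \<le> 1" using \<rho> \<delta>_pos by (auto simp: \<rho>1_def)
  define emax where "emax = min s (\<rho>1 / 2)"
  have emax: "0 < emax" "emax \<le> s" "emax \<le> \<rho>1 / 2" using nb \<rho>1 by (auto simp: emax_def)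
  have vp0W: "vp0 \<in> W" "Q vp0 \<in> W" using vp_W W_sym by (auto simp: vp0_def)
  define seg where "seg = closed_segment vp0 (Q vp0)"
  have segW: "seg \<subseteq> W" using vp0W W_convex by (simp add: seg_def closed_segment_subset)
  obtain r where r: "r > 0" "(\<Union>x\<in>seg. cball x r) \<subseteq> W"
    using compact_subset_open_imp_cball_epsilon_subset[OF _ W_open segW] by (auto simp: seg_def)
  define K where "K = (\<Union>x\<in>seg. \<Union>y\<in>cball 0 r. {x + y})"
  have Kconv: "convex K" unfolding K_def seg_def by (intro convex_sums) auto
  have "K = {x + y | x y. x \<in> seg \<and> y \<in> cball 0 r}" unfolding K_def by blast
  moreover have "compact {x + y | x y. x \<in> seg \<and> y \<in> cball 0 r}"
    by (rule compact_sums) (auto simp: seg_def)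
  ultimately have "compact K" by simp
  then have Kclosed: "closed K" by (rule compact_imp_closed)
  have KW: "K \<subseteq> W"
  proof
    fix z assume "z \<in> K"
    then obtain x y where "x \<in> seg" "y \<in> cball 0 r" "z = x + y" by (auto simp: K_def)
    then have "z \<in> cball x r" by (simp add: dist_norm)
    then show "z \<in> W" using r \<open>x \<in> seg\<close> by blast
  qed
  have ballK: "ball c r \<subseteq> K" if "c \<in> seg" for c
  proof
    fix z assume "z \<in> ball c r"
    then have "z - c \<in> cball 0 r" by (simp add: dist_norm norm_minus_commute)
    then show "z \<in> K" unfolding K_def using that by (intro UN_I[of c] UN_I[of "z - c"]) auto
  qed
  have ballK1: "ball vp0 r \<subseteq> K" "ball (Q vp0) r \<subseteq> K" using ballK by (auto simp: seg_def)
  have cont_at: "\<exists>d>0. \<forall>z. norm z < d \<longrightarrow> dist (f z) (f (0, 0)) < e"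
    if fc: "continuous_on UNIV f" and ep: "e > 0" for f :: "real \<times> real \<Rightarrow> 'w::metric_space" and e
  proof -
    obtain d where "d > 0" "\<forall>x'. dist x' (0, 0) < d \<longrightarrow> dist (f x') (f (0, 0)) < e"
      using fc ep unfolding continuous_on_iff by (meson UNIV_I)
    then show ?thesis by (intro exI[of _ d]) (auto simp: dist_norm)
  qed
  obtain \<beta>1 where \<beta>1: "\<beta>1 > 0" "\<And>z. norm z < \<beta>1 \<Longrightarrow> dist (A z) (A (0,0)) < s * a0 / 2"
    using cont_at[OF A_cont, of "s * a0 / 2"] nb a0 by auto
  obtain \<beta>2 where \<beta>2: "\<beta>2 > 0" "\<And>z. norm z < \<beta>2 \<Longrightarrow> dist (B z) B0 < 1"
    using cont_at[OF B_cont, of 1] by (auto simp: B0_def)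
  obtain \<beta>3 where \<beta>3: "\<beta>3 > 0" "\<And>z. norm z < \<beta>3 \<Longrightarrow> dist (vp z) vp0 < r / (2 * nQ)"
    using cont_at[OF vp_cont, of "r / (2 * nQ)"] r nQ1 by (auto simp: vp0_def)
  define \<beta> where "\<beta> = min \<beta>1 (min \<beta>2 \<beta>3)"
  have \<beta>: "\<beta> > 0" using \<beta>1 \<beta>2 \<beta>3 by (simp add: \<beta>_def)
  have Aclose: "\<bar>A z - A (0, 0)\<bar> < s * a0 / 2" and Bclose: "norm (B z) < nb0 + 1"
    and vclose: "norm (vp z - vp0) < r / (2 * nQ)" if "norm z < \<beta>" for z
  proof -
    show "\<bar>A z - A (0, 0)\<bar> < s * a0 / 2" using \<beta>1(2)[of z] that by (simp add: \<beta>_def dist_real_def)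
    have "dist (B z) B0 < 1" using \<beta>2(2)[of z] that by (simp add: \<beta>_def)
    then show "norm (B z) < nb0 + 1" unfolding nb0_def dist_norm
      using norm_triangle_ineq2[of "B z" B0] by linarith
    show "norm (vp z - vp0) < r / (2 * nQ)" using \<beta>3(2)[of z] that by (simp add: \<beta>_def dist_norm)
  qed
  have Aprops: "a0 / 2 < \<bar>A z\<bar> \<and> \<sigma> * A z = \<bar>A z\<bar> \<and> \<bar>\<bar>A z\<bar> - a0\<bar> < s * a0 / 2" if "norm z < \<beta>" for z
  proof -
    define w where "w = s * a0 / 2"
    have h: "\<bar>A z - A (0, 0)\<bar> < w" unfolding w_def by (rule Aclose[OF that])
    have hw: "w \<le> a0 / 2" unfolding w_def using nb a0 by (intro divide_right_mono mult_right_mono[of s 1, simplified]) auto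
    have "a0 / 2 < \<bar>A z\<bar> \<and> \<sigma> * A z = \<bar>A z\<bar> \<and> \<bar>\<bar>A z\<bar> - a0\<bar> < w"
    proof (cases "A (0,0) > 0")
      case True
      then have "\<sigma> = 1" "a0 = A (0, 0)" by (auto simp: \<sigma>_def a0_def)
      then show ?thesis using h hw True by (auto simp: abs_if split: if_splits)
    next
      case False
      then have "A (0, 0) < 0" using a0 by (auto simp: a0_def)
      then have "\<sigma> = -1" "a0 = - A (0, 0)" by (auto simp: \<sigma>_def a0_def)
      then show ?thesis using h hw \<open>A (0, 0) < 0\<close> by (auto simp: abs_if split: if_splits)
    qed
    then show ?thesis by (simp add: w_def)
  qed
  define Oreg where "Oreg U = {z::real\<times>real. 0 < snd z \<and> snd z < emax \<and> \<bar>fst z\<bar> < \<rho>1 \<and> norm z < \<beta> \<and>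
      \<kappa> * (1 - s) < \<bar>A z\<bar> * U powr (- snd z) \<and> \<bar>A z\<bar> * U powr (- snd z) < \<kappa> * (1 + s) \<and>
      - (m + s) < \<sigma> * fst z / U \<and> \<sigma> * fst z / U < - m + s \<and>
      norm (vp z - vp0) + U powr (1 - snd z) * (norm (B z) + \<eta>) < r / nQ}" for U
  have good: "lorenz_attractor {(u, v). \<bar>u\<bar> < \<delta> \<and> v \<in> W}
                (poincare_map A B vp Q p q (\<mu>, \<epsilon>))
                (\<mu>, vp (\<mu>, \<epsilon>)) (- \<mu>, Q (vp (\<mu>, \<epsilon>)))"
    if U: "0 < U" "U < \<rho>1" and z: "(\<mu>, \<epsilon>) \<in> Oreg U" for U \<mu> \<epsilon>
  proof -
    have zz: "0 < \<epsilon>" "\<epsilon> < emax" "\<bar>\<mu>\<bar> < \<rho>1" "norm (\<mu>, \<epsilon>) < \<beta>"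
      "\<kappa> * (1 - s) < \<bar>A (\<mu>, \<epsilon>)\<bar> * U powr (- \<epsilon>)" "\<bar>A (\<mu>, \<epsilon>)\<bar> * U powr (- \<epsilon>) < \<kappa> * (1 + s)"
      "- (m + s) < \<sigma> * \<mu> / U" "\<sigma> * \<mu> / U < - m + s"
      "norm (vp (\<mu>, \<epsilon>) - vp0) + U powr (1 - \<epsilon>) * (norm (B (\<mu>, \<epsilon>)) + \<eta>) < r / nQ"
      using z by (auto simp: Oreg_def)
    define Y where "Y = U powr (- \<epsilon>)"
    define X where "X = \<bar>A (\<mu>, \<epsilon>)\<bar> * Y"
    define \<nu> where "\<nu> = 1 - \<epsilon>"
    have eps: "\<epsilon> \<le> s" "\<epsilon> < \<rho>1 / 2" "\<bar>\<epsilon>\<bar> < \<delta>" "\<bar>\<epsilon>\<bar> < \<rho>" using zz emax \<rho>1 by auto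
    have mu: "\<bar>\<mu>\<bar> < \<delta>" "\<bar>\<mu>\<bar> < \<rho>" using zz \<rho>1 by auto
    have nu: "0 \<le> \<nu>" "1 - s \<le> \<nu>" "\<nu> \<le> 1" "1/2 \<le> \<nu>" using eps nb zz by (auto simp: \<nu>_def)
    note Ap = Aprops[OF zz(4)]
    have Y0: "0 < Y" using U by (simp add: Y_def)
    have UY: "U powr (1 - \<epsilon>) = U * Y" using U powr_add[of U 1 "- \<epsilon>"] by (simp add: Y_def)
    have eY: "\<eta> * Y \<le> 2 * s * X"
    proof -
      have "\<eta> \<le> s * a0" by (rule \<eta>1(1))
      also have "\<dots> \<le> s * (2 * \<bar>A (\<mu>, \<epsilon>)\<bar>)" using Ap nb by (intro mult_left_mono) auto
      finally show ?thesis using Y0 by (simp add: X_def mult_right_mono algebra_simps)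
    qed
    have Aeta: "\<eta> \<le> \<bar>A (\<mu>, \<epsilon>)\<bar> * \<nu>" "a0 / 8 \<le> \<bar>A (\<mu>, \<epsilon>)\<bar> * \<nu> - \<eta>"
    proof -
      have "\<bar>A (\<mu>, \<epsilon>)\<bar> * (1/2) \<le> \<bar>A (\<mu>, \<epsilon>)\<bar> * \<nu>" using nu by (intro mult_left_mono) auto
      moreover have "\<eta> \<le> a0 / 32" by (rule \<eta>32(1))
      ultimately show "\<eta> \<le> \<bar>A (\<mu>, \<epsilon>)\<bar> * \<nu>" "a0 / 8 \<le> \<bar>A (\<mu>, \<epsilon>)\<bar> * \<nu> - \<eta>" using Ap a0 by linarith+
    qed
    have e1: "\<eta> \<le> 1" by (rule \<eta>32(2))
    have bnd: "\<And>x v. 0 < x \<Longrightarrow> x \<le> U \<Longrightarrow> v \<in> W \<Longrightarrow>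
          \<bar>p x v (\<mu>, \<epsilon>)\<bar> \<le> \<eta> * x powr (1 - \<epsilon>) \<and>
          norm (q x v (\<mu>, \<epsilon>)) \<le> \<eta> * x powr (1 - \<epsilon>) \<and>
          norm (pv x v (\<mu>, \<epsilon>)) \<le> \<eta> * x powr (1 - \<epsilon>) \<and>
          norm (qv x v (\<mu>, \<epsilon>)) \<le> \<eta> * x powr (1 - \<epsilon>) \<and>
          \<bar>pu x v (\<mu>, \<epsilon>)\<bar> \<le> \<eta> * x powr (- \<epsilon>) \<and>
          norm (qu x v (\<mu>, \<epsilon>)) \<le> \<eta> * x powr (- \<epsilon>)"
    proof -
      fix x v assume "0 < x" "x \<le> U" "v \<in> W"
      then have "x < \<rho>" using U \<rho>1 by linarith
      then show "?thesis x v" using \<rho>b mu eps \<open>0 < x\<close> \<open>v \<in> W\<close> by blast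
    qed
    have tle: "x powr (1 - \<epsilon>) \<le> U * Y" "0 \<le> x powr (1 - \<epsilon>)" if "0 < x" "x \<le> U" for x
      using that nu by (auto simp: UY[symmetric] \<nu>_def intro!: powr_mono2)
    have zle: "Y \<le> x powr (- \<epsilon>)" if "0 < x" "x \<le> U" for x
      unfolding Y_def using that zz by (intro powr_mono2') auto
    have t1: "x powr (1 - \<epsilon>) \<le> 1" if "0 < x" "x \<le> U" for x
      using that U \<rho>1 nu by (intro powr_le1) (auto simp: \<nu>_def)
    show ?thesis
    proof (rule lorenz_generic[where K = K and vcen = vp0 and U = U and r = r and \<eta> = \<eta> and a = a' and b = b' and c = c' and d = d'])
      show "linear Q" "Q ` W = W" by (fact Q_lin, fact W_sym)
      show "((\<lambda>(y, w). p y w (\<mu>, \<epsilon>)) has_derivative (\<lambda>(h, k). h * pu x v (\<mu>, \<epsilon>) + blinfun_apply (pv x v (\<mu>, \<epsilon>)) k)) (at (x, v))"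
        if "0 < x" "x < \<delta>" "v \<in> W" for x v using p_deriv mu eps that by blast
      show "((\<lambda>(y, w). q y w (\<mu>, \<epsilon>)) has_derivative (\<lambda>(h, k). h *\<^sub>R qu x v (\<mu>, \<epsilon>) + blinfun_apply (qv x v (\<mu>, \<epsilon>)) k)) (at (x, v))"
        if "0 < x" "x < \<delta>" "v \<in> W" for x v using q_deriv mu eps that by blast
      show "closed K" "convex K" "K \<subseteq> W" "0 < r" "ball vp0 r \<subseteq> K" "ball (Q vp0) r \<subseteq> K"
        using Kclosed Kconv KW r ballK1 by auto
      show "0 < U" "U < \<delta>" "\<bar>\<mu>\<bar> < \<delta>" "\<epsilon> < 1" using U \<rho>1 mu eps nb by auto
      show "\<And>x v. 0 < x \<Longrightarrow> x \<le> U \<Longrightarrow> v \<in> W \<Longrightarrow>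
          \<bar>p x v (\<mu>, \<epsilon>)\<bar> \<le> \<eta> * x powr (1 - \<epsilon>) \<and>
          norm (q x v (\<mu>, \<epsilon>)) \<le> \<eta> * x powr (1 - \<epsilon>) \<and>
          norm (pv x v (\<mu>, \<epsilon>)) \<le> \<eta> * x powr (1 - \<epsilon>) \<and>
          norm (qv x v (\<mu>, \<epsilon>)) \<le> \<eta> * x powr (1 - \<epsilon>) \<and>
          \<bar>pu x v (\<mu>, \<epsilon>)\<bar> \<le> \<eta> * x powr (- \<epsilon>) \<and>
          norm (qu x v (\<mu>, \<epsilon>)) \<le> \<eta> * x powr (- \<epsilon>)" by (rule bnd)
      show "\<bar>\<mu> + A (\<mu>, \<epsilon>) * x powr (1 - \<epsilon>) + P\<bar> < U"
        if "0 < x" "x \<le> U" "\<bar>P\<bar> \<le> \<eta> * x powr (1 - \<epsilon>)" for x P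
      proof -
        have "\<mu> + A (\<mu>, \<epsilon>) * x powr (1 - \<epsilon>) + P
            = \<sigma> * (\<sigma> * \<mu> + \<bar>A (\<mu>, \<epsilon>)\<bar> * x powr (1 - \<epsilon>) + \<sigma> * P)"
          using \<sigma>2 Ap by (simp add: algebra_simps) (metis mult.assoc mult_1)
        then have eq: "\<bar>\<mu> + A (\<mu>, \<epsilon>) * x powr (1 - \<epsilon>) + P\<bar>
            = \<bar>\<sigma> * \<mu> + \<bar>A (\<mu>, \<epsilon>)\<bar> * x powr (1 - \<epsilon>) + \<sigma> * P\<bar>"
          using \<sigma>2 by (simp add: abs_mult) (metis abs_mult abs_one abs_sgn_eq \<sigma>_def a0 a0_def abs_0 less_irrefl)
        have s1: "\<bar>\<sigma>\<bar> = 1" using a0 by (auto simp: \<sigma>_def a0_def abs_sgn_eq)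
        have M: "- U * (m + s) < \<sigma> * \<mu>" "\<sigma> * \<mu> < U * (- m + s)"
        proof -
          have "- (m + s) * U < \<sigma> * \<mu>" "\<sigma> * \<mu> < (- m + s) * U"
            using zz(7,8) U by (simp_all add: pos_less_divide_eq pos_divide_less_eq)
          then show "- U * (m + s) < \<sigma> * \<mu>" "\<sigma> * \<mu> < U * (- m + s)"
            by (simp_all add: algebra_simps)
        qed
        show ?thesis unfolding eq
        proof (rule arith_hU[OF tle(2)[OF that(1,2)] tle(1)[OF that(1,2)] _ eY X_def _ _ U(1) M])
          show "\<bar>\<sigma> * P\<bar> \<le> \<eta> * x powr (1 - \<epsilon>)" using that s1 by (simp add: abs_mult)
          show "X < \<kappa> * (1 + s)" using zz(6) by (simp add: X_def Y_def)
          have "\<bar>A (\<mu>, \<epsilon>)\<bar> * \<nu> \<le> \<bar>A (\<mu>, \<epsilon>)\<bar> * 1" using nu by (intro mult_left_mono) auto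
          then show "\<eta> \<le> \<bar>A (\<mu>, \<epsilon>)\<bar>" using Aeta(1) by linarith
          show "- m + s + \<kappa> * (1 + s) * (1 + 2 * s) < 1" "m + s < 1" "0 \<le> s" "0 \<le> \<eta>"
            using nb \<eta>0 by (auto simp: m_def)
        qed
      qed
      show "norm (vp (\<mu>, \<epsilon>) + x powr (1 - \<epsilon>) *\<^sub>R B (\<mu>, \<epsilon>) + z - vp0) < r / max 1 (onorm Q)"
        if "0 < x" "x \<le> U" "norm z \<le> \<eta> * x powr (1 - \<epsilon>)" for x z
      proof -
        have "norm (vp (\<mu>, \<epsilon>) + x powr (1 - \<epsilon>) *\<^sub>R B (\<mu>, \<epsilon>) + z - vp0)
            \<le> norm (vp (\<mu>, \<epsilon>) - vp0) + norm (x powr (1 - \<epsilon>) *\<^sub>R B (\<mu>, \<epsilon>)) + norm z"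
        proof -
          have eqq: "vp (\<mu>, \<epsilon>) + x powr (1 - \<epsilon>) *\<^sub>R B (\<mu>, \<epsilon>) + z - vp0
              = (vp (\<mu>, \<epsilon>) - vp0) + x powr (1 - \<epsilon>) *\<^sub>R B (\<mu>, \<epsilon>) + z" by (simp add: algebra_simps)
          have "norm ((vp (\<mu>, \<epsilon>) - vp0) + x powr (1 - \<epsilon>) *\<^sub>R B (\<mu>, \<epsilon>) + z)
              \<le> norm ((vp (\<mu>, \<epsilon>) - vp0) + x powr (1 - \<epsilon>) *\<^sub>R B (\<mu>, \<epsilon>)) + norm z"
            by (rule norm_triangle_ineq)
          moreover have "norm ((vp (\<mu>, \<epsilon>) - vp0) + x powr (1 - \<epsilon>) *\<^sub>R B (\<mu>, \<epsilon>))
              \<le> norm (vp (\<mu>, \<epsilon>) - vp0) + norm (x powr (1 - \<epsilon>) *\<^sub>R B (\<mu>, \<epsilon>))"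
            by (rule norm_triangle_ineq)
          ultimately show ?thesis unfolding eqq by linarith
        qed
        also have "\<dots> \<le> norm (vp (\<mu>, \<epsilon>) - vp0) + x powr (1 - \<epsilon>) * (norm (B (\<mu>, \<epsilon>)) + \<eta>)"
          using that by (simp add: algebra_simps)
        also have "\<dots> \<le> norm (vp (\<mu>, \<epsilon>) - vp0) + U powr (1 - \<epsilon>) * (norm (B (\<mu>, \<epsilon>)) + \<eta>)"
          using tle[OF that(1,2)] UY \<eta>0 by (intro add_left_mono mult_right_mono) auto
        also have "\<dots> < r / nQ" by (rule zz(9))
        finally show ?thesis by (simp add: nQ_def)
      qed
      show "1 \<le> a' * \<bar>A (\<mu>, \<epsilon>) * (1 - \<epsilon>) * x powr (- \<epsilon>) + P\<bar>"
        if "0 < x" "x \<le> U" "\<bar>P\<bar> \<le> \<eta> * x powr (- \<epsilon>)" for x P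
        using arith_hf[OF nu(1,2) _ zle[OF that(1,2)] that(3) X_def _ eY Aeta(1) _ _ nb(6) a'_def] that zz(5) nb
        by (simp add: \<nu>_def X_def Y_def)
      show "G \<le> c' * \<bar>A (\<mu>, \<epsilon>) * (1 - \<epsilon>) * x powr (- \<epsilon>) + P\<bar>"
        if "0 < x" "x \<le> U" "\<bar>P\<bar> \<le> \<eta> * x powr (- \<epsilon>)"
          "G \<le> max 1 (onorm Q) * (((1 - \<epsilon>) * norm (B (\<mu>, \<epsilon>)) + \<eta>) * x powr (- \<epsilon>))" for x P G
        using arith_hc[OF nu(1,3) _ that(3) Aeta(2) a0(1) nQ1 norm_ge_zero _ _ e1, of "norm (B (\<mu>, \<epsilon>))" nb0 G c']
          that Bclose[OF zz(4)] \<eta>0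
        by (simp add: \<nu>_def nQ_def c'_def)
      show "max 1 (onorm Q) * (max 1 (onorm Q) * (\<eta> * x powr (1 - \<epsilon>))) \<le> b'" if "0 < x" "x \<le> U" for x
      proof -
        have "\<eta> * x powr (1 - \<epsilon>) \<le> \<eta> * 1" using t1[OF that] \<eta>0 by (intro mult_left_mono) auto
        then show ?thesis using nQ1 by (simp add: b'_def nQ_def[symmetric] mult_left_mono)
      qed
      show "max 1 (onorm Q) * (\<eta> * x powr (1 - \<epsilon>)) \<le> d'" if "0 < x" "x \<le> U" for x
      proof -
        have "\<eta> * x powr (1 - \<epsilon>) \<le> \<eta> * 1" using t1[OF that] \<eta>0 by (intro mult_left_mono) auto
        then show ?thesis using nQ1 by (simp add: d'_def nQ_def[symmetric] mult_left_mono)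
      qed
      show "a' < 1" "b' < 1" "c' * d' < (1 - a') * (1 - b')" using a'1 b'1 abcd by auto
      have "r / nQ \<le> r" using nQ1 r by (simp add: divide_le_eq)
      moreover have "0 \<le> U powr (1 - \<epsilon>) * (norm (B (\<mu>, \<epsilon>)) + \<eta>)" using \<eta>0 by simp
      ultimately have "norm (vp (\<mu>, \<epsilon>) - vp0) < r" using zz(9) by linarith
      then have "vp (\<mu>, \<epsilon>) \<in> ball vp0 r" by (simp add: dist_norm norm_minus_commute)
      then show "vp (\<mu>, \<epsilon>) \<in> W" using ballK1 KW by auto
    qed
  qed
  have Oopen: "open (Oreg U)" if "0 < U" for U
    unfolding Oreg_def using that
    by (intro open_Collect_conj open_Collect_less continuous_intros A_cont B_cont vp_cont) auto
  define G where "G = {(\<mu>, \<epsilon>). lorenz_attractor {(u, v). \<bar>u\<bar> < \<delta> \<and> v \<in> W}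
                (poincare_map A B vp Q p q (\<mu>, \<epsilon>))
                (\<mu>, vp (\<mu>, \<epsilon>)) (- \<mu>, Q (vp (\<mu>, \<epsilon>)))}"
  have OG: "Oreg U \<subseteq> G" if "0 < U" "U < \<rho>1" for U
    using good[OF that] by (auto simp: G_def)
  have approach: "\<exists>y\<in>interior G. dist y (0, 0) < e" if e: "e > 0" for e
  proof -
    define emin where "emin = min emax (min (e/2) (\<beta>/2))"
    have emin: "0 < emin" "emin \<le> emax" "emin \<le> e/2" "emin \<le> \<beta>/2" using emax e \<beta> by (auto simp: emin_def)
    have ak: "0 < a0 / \<kappa>" "a0 / \<kappa> < 1" using a0 nb by auto
    define L0 where "L0 = ln (a0 / \<kappa>)"
    have L0: "L0 < 0" using ak by (simp add: L0_def)
    have rr: "0 < r * a0 / (4 * nQ * \<kappa> * (nb0 + 2))" using r a0 nQ1 nb nb02 by simp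
    define U where "U = min (1/2) (min (\<rho>1/2) (min (emin/2) (min (exp (L0 / emin) / 2) (r * a0 / (4 * nQ * \<kappa> * (nb0 + 2))))))"
    have U: "0 < U" "U < 1" "U < \<rho>1" "U \<le> emin / 2" "U < exp (L0 / emin)"
      "U \<le> r * a0 / (4 * nQ * \<kappa> * (nb0 + 2))"
    proof -
      have u1: "U \<le> 1/2" "U \<le> \<rho>1/2" "U \<le> emin/2" "U \<le> exp (L0 / emin) / 2"
        "U \<le> r * a0 / (4 * nQ * \<kappa> * (nb0 + 2))" by (simp_all add: U_def)
      have "0 < U" using \<rho>1 emin rr by (simp add: U_def)
      moreover have "0 < exp (L0 / emin)" by simp
      ultimately show "0 < U" "U < 1" "U < \<rho>1" "U \<le> emin / 2" "U < exp (L0 / emin)"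
        "U \<le> r * a0 / (4 * nQ * \<kappa> * (nb0 + 2))" using u1 \<rho>1 by linarith+
    qed
    have lnU: "ln U < 0" "ln U < L0 / emin" using U
      by (simp, metis exp_gt_zero ln_exp ln_less_cancel_iff)
    define \<epsilon>0 where "\<epsilon>0 = L0 / ln U"
    have \<epsilon>0: "0 < \<epsilon>0" "\<epsilon>0 < emin"
    proof -
      show "0 < \<epsilon>0" using L0 lnU by (simp add: \<epsilon>0_def divide_neg_neg)
      have "ln U * emin < L0" using lnU emin by (simp add: pos_less_divide_eq)
      then show "\<epsilon>0 < emin" using lnU by (simp add: \<epsilon>0_def neg_divide_less_eq mult.commute)
    qed
    have Y: "U powr (- \<epsilon>0) = \<kappa> / a0"
    proof -
      have "U powr (- \<epsilon>0) = exp (- \<epsilon>0 * ln U)" using U by (simp add: powr_def)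
      also have "- \<epsilon>0 * ln U = - L0" using lnU by (simp add: \<epsilon>0_def)
      also have "exp (- L0) = \<kappa> / a0" using ak by (simp add: L0_def exp_minus)
      finally show ?thesis .
    qed
    define \<mu>0 where "\<mu>0 = - \<sigma> * m * U"
    have m1: "0 < m" "m < 1" using nb by (auto simp: m_def)
    have s1: "\<bar>\<sigma>\<bar> = 1" using a0 by (auto simp: \<sigma>_def a0_def abs_sgn_eq)
    have mu0: "\<bar>\<mu>0\<bar> = m * U" using s1 m1 U by (simp add: \<mu>0_def abs_mult)
    have mu0U: "\<bar>\<mu>0\<bar> \<le> U" using mu0 m1 U by (simp add: mult_left_le_one_le)
    define z0 where "z0 = (\<mu>0, \<epsilon>0)"
    have nz0: "norm z0 < e" "norm z0 < \<beta>"
    proof -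
      have "norm z0 \<le> \<bar>\<mu>0\<bar> + \<bar>\<epsilon>0\<bar>" unfolding z0_def using norm_Pair_le[of \<mu>0 \<epsilon>0] by simp
      also have "\<dots> < 3 / 2 * emin" using mu0U U \<epsilon>0 by simp
      finally show "norm z0 < e" "norm z0 < \<beta>" using emin by auto
    qed
    note Ap = Aprops[OF nz0(2)]
    have "z0 \<in> Oreg U"
    proof -
      have w: "0 < s * a0" using nb a0 by simp
      have "\<bar>\<bar>A z0\<bar> - a0\<bar> < s * a0 / 2" using Ap by simp
      then have "\<bar>A z0\<bar> - a0 < s * a0 / 2 \<and> - (\<bar>A z0\<bar> - a0) < s * a0 / 2" by (simp only: abs_less_iff)
      then have "a0 - s * a0 < \<bar>A z0\<bar>" "\<bar>A z0\<bar> < a0 + s * a0" using w by linarith+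
      moreover have "a0 * (1 - s) = a0 - s * a0" "a0 * (1 + s) = a0 + s * a0" by (simp_all add: algebra_simps)
      ultimately have A1: "a0 * (1 - s) < \<bar>A z0\<bar>" "\<bar>A z0\<bar> < a0 * (1 + s)" by simp_all
      have ka: "0 < \<kappa> / a0" using nb a0 by simp
      have X1: "\<kappa> * (1 - s) < \<bar>A z0\<bar> * (\<kappa> / a0)"
        using mult_strict_right_mono[OF A1(1) ka] a0 by (simp add: mult.commute)
      have X2: "\<bar>A z0\<bar> * (\<kappa> / a0) < \<kappa> * (1 + s)"
        using mult_strict_right_mono[OF A1(2) ka] a0 by (simp add: mult.commute)
      have sig: "\<sigma> * \<mu>0 / U = - m" using \<sigma>2 U by (simp add: \<mu>0_def)
      have UP: "U powr (1 - \<epsilon>0) = U * (\<kappa> / a0)" using U Y powr_add[of U 1 "- \<epsilon>0"] by simp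
      have vpc: "norm (vp z0 - vp0) + U powr (1 - \<epsilon>0) * (norm (B z0) + \<eta>) < r / nQ"
      proof -
        have "norm (B z0) + \<eta> \<le> nb0 + 2" using Bclose[OF nz0(2)] \<eta>32 by linarith
        then have "U powr (1 - \<epsilon>0) * (norm (B z0) + \<eta>) \<le> U * (\<kappa> / a0) * (nb0 + 2)"
          unfolding UP using U ka by (intro mult_left_mono) (auto simp del: times_divide_eq_right)
        also have "\<dots> \<le> r * a0 / (4 * nQ * \<kappa> * (nb0 + 2)) * (\<kappa> / a0) * (nb0 + 2)"
          using U ka nb02 by (intro mult_right_mono) auto
        also have "\<dots> = r / (4 * nQ)"
        proof -
          have gen: "r * a0 / (4 * nQ * \<kappa> * k) * (\<kappa> / a0) * k = r / (4 * nQ)" if "k \<noteq> 0" for k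
            using a0 nb nQ1 that by (simp add: field_simps)
          show ?thesis using gen[of "nb0 + 2"] nb02 by simp
        qed
        finally have "U powr (1 - \<epsilon>0) * (norm (B z0) + \<eta>) \<le> r / (4 * nQ)" .
        moreover have "norm (vp z0 - vp0) < r / (2 * nQ)" by (rule vclose[OF nz0(2)])
        moreover have "r / (2 * nQ) + r / (4 * nQ) < r / nQ" using r nQ1 by (simp add: field_simps)
        ultimately show ?thesis by linarith
      qed
      show ?thesis unfolding Oreg_def using \<epsilon>0 emin m1 U nz0 X1 X2 sig vpc mu0U nb Y
        by (auto simp: z0_def)
    qed
    then have "z0 \<in> interior G" using OG[OF U(1) U(3)] Oopen[OF U(1)] interior_maximal by blast
    moreover have "dist z0 (0, 0) = norm z0" by (simp add: dist_norm flip: zero_prod_def)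
    ultimately show ?thesis using nz0 by (intro bexI[of _ z0]) auto
  qed
  show ?thesis
  proof (intro exI[of _ "interior G"] conjI)
    show "open (interior G)" by simp
    show "(0, 0) \<in> closure (interior G)" unfolding closure_approachable using approach by blast
    show "\<forall>(\<mu>, \<epsilon>)\<in>interior G. lorenz_attractor {(u, v). \<bar>u\<bar> < \<delta> \<and> v \<in> W}
                (poincare_map A B vp Q p q (\<mu>, \<epsilon>))
                (\<mu>, vp (\<mu>, \<epsilon>)) (- \<mu>, Q (vp (\<mu>, \<epsilon>)))"
      using interior_subset[of G] by (auto simp: G_def)
  qed
qed
end
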